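(* Let $m$ and $n$ be positive integers, let $x$ be a real number, and put $\lambda=n(n+2x+1)$. Then \[ \sum_{i=1}^n (x+i)^{2m-1}=\sum_{k=1}^m F^{(m)}_k(x)\,\lambda^k, \] where, for $1\le k\le m$, \[ F^{(m)}_k(x)=\frac{1}{2m}\sum_{i=k}^m \binom{2m}{2i}\binom{i}{k}\left(x+\frac12\right)^{2i-2k} B_{2m-2i}\!\left(\frac12\right). \]
   Context: The Bernoulli polynomials $B_n(x)$ are defined by the generating function $\sum_{n\ge 0} B_n(x)\frac{t^n}{n!}=\frac{t e^{xt}}{e^t-1}$. *)

theory Defs
  imports Complex_Main "HOL-Computational_Algebra.Formal_Power_Series"
begin

definition bernpoly :: "nat \<Rightarrow> real \<Rightarrow> real" where
  "bernpoly n x = fact n * fps_nth ((fps_X * fps_exp x) / (fps_exp 1 - 1)) n"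

definition F_coeff :: "nat \<Rightarrow> nat \<Rightarrow> real \<Rightarrow> real" where
  "F_coeff m k x = 1 / (2 * real m) *
     (\<Sum>i=k..m. real ((2*m) choose (2*i)) * real (i choose k) *
        (x + 1/2) ^ (2*i - 2*k) * bernpoly (2*m - 2*i) (1/2))"

end

theory Submission
  imports Defs
begin
unbundle fps_syntax
definition DD :: "real fps" where "DD = Abs_fps (\<lambda>n. 1 / fact (Suc n))"
definition GG :: "real \<Rightarrow> real fps" where "GG x = fps_exp x * inverse DD"

lemma DD0: "DD $ 0 = 1" by (simp add: DD_def)
lemma DD_nz: "DD \<noteq> 0" using DD0 by auto

lemma ED: "fps_exp 1 - 1 = fps_X * DD"
proof (rule fps_ext)
  fix n show "(fps_exp 1 - 1) $ n = (fps_X * DD) $ n"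
    by (cases n) (auto simp: DD_def field_simps)
qed

lemma GG_DD: "GG x * DD = fps_exp x"
  using DD0 by (simp add: GG_def mult.assoc inverse_mult_eq_1)

lemma bernpoly_GG: "bernpoly n x = fact n * GG x $ n"
proof -
  have "(fps_X * fps_exp x) / (fps_exp 1 - 1) = (fps_exp x * fps_X) / (DD * fps_X)"
    by (simp add: ED mult.commute)
  also have "\<dots> = fps_exp x / DD" by (rule fps_divide_cancel) simp
  also have "\<dots> = GG x" using DD0 by (simp add: fps_divide_unit GG_def)
  finally show ?thesis by (simp add: bernpoly_def)
qed

lemma GG_add: "GG (x + h) = fps_exp h * GG x"
  by (simp add: GG_def fps_exp_add_mult mult_ac)

lemma GG_diff: "GG (x + 1) - GG x = fps_X * fps_exp x"
proof -
  have "(GG (x + 1) - GG x) * DD = (fps_X * fps_exp x) * DD"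
  proof -
    have "(GG (x + 1) - GG x) * DD = GG (x + 1) * DD - GG x * DD" by (simp add: left_diff_distrib)
    also have "\<dots> = fps_exp x * fps_exp 1 - fps_exp x" by (simp only: GG_DD fps_exp_add_mult)
    also have "\<dots> = fps_exp x * (fps_exp 1 - 1)" by (simp add: right_diff_distrib)
    also have "\<dots> = (fps_X * fps_exp x) * DD" by (simp only: ED mult_ac)
    finally show ?thesis .
  qed
  then show ?thesis using DD_nz by simp
qed

lemma GG_half_sym: "GG (1/2) oo (- fps_X) = GG (1/2)"
proof -
  have c0: "(- fps_X :: real fps) $ 0 = 0" by simp
  have d: "(DD oo - fps_X) * (- fps_X) = fps_exp (-1) - 1"
  proof -
    have "(fps_X * DD) oo (- fps_X) = fps_exp (-1) - 1"
      by (simp add: ED[symmetric] fps_compose_sub_distrib)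
    then show ?thesis by (simp add: fps_compose_mult_distrib[OF c0] mult.commute)
  qed
  have g: "(GG (1/2) oo - fps_X) * (DD oo - fps_X) = fps_exp (-(1/2))"
    using arg_cong[OF GG_DD[of "1/2"], of "\<lambda>f. f oo - fps_X"]
    by (simp add: fps_compose_mult_distrib[OF c0])
  have "(GG (1/2) oo - fps_X) * (fps_X * DD) = GG (1/2) * (fps_X * DD)"
  proof -
    have "(GG (1/2) oo - fps_X) * (fps_X * DD) = (GG (1/2) oo - fps_X) * (fps_exp 1 - 1)"
      by (simp add: ED)
    also have "\<dots> = - ((GG (1/2) oo - fps_X) * (DD oo - fps_X) * (- fps_X)) * fps_exp 1"
    proof -
      have "fps_exp 1 - 1 = - ((fps_exp (-1) - 1) * fps_exp (1::real))"
        by (simp add: algebra_simps flip: fps_exp_add_mult)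
      then show ?thesis by (simp add: d[symmetric] mult_ac)
    qed
    also have "\<dots> = fps_X * (fps_exp (-(1/2)) * fps_exp 1)" using g by (simp add: mult_ac)
    also have "\<dots> = fps_X * fps_exp (1/2)" by (simp flip: fps_exp_add_mult)
    also have "\<dots> = GG (1/2) * (fps_X * DD)" by (simp add: GG_DD[symmetric] mult_ac)
    finally show ?thesis .
  qed
  then show ?thesis using DD_nz by simp
qed

lemma bern_half_odd: "odd k \<Longrightarrow> bernpoly k (1/2) = 0"
proof -
  assume "odd k"
  have "(GG (1/2) oo - fps_X) $ k = GG (1/2) $ k" by (simp add: GG_half_sym)
  then have "- (GG (1/2) $ k) = GG (1/2) $ k" using \<open>odd k\<close> by (simp add: fps_compose_uminus')
  then show ?thesis by (simp add: bernpoly_GG)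
qed

lemma bern_shift: "bernpoly N (t + s) = (\<Sum>j=0..N. real (N choose j) * bernpoly (N-j) t * s^j)"
proof -
  have "bernpoly N (t + s) = fact N * (fps_exp s * GG t) $ N"
    by (simp add: bernpoly_GG GG_add)
  also have "\<dots> = (\<Sum>j=0..N. fact N * (s^j / fact j * GG t $ (N-j)))"
    by (simp add: fps_mult_nth sum_distrib_left)
  also have "\<dots> = (\<Sum>j=0..N. real (N choose j) * bernpoly (N-j) t * s^j)"
  proof (rule sum.cong)
    fix j assume "j \<in> {0..N}"
    then have "j \<le> N" by simp
    then have "real (N choose j) = fact N / (fact j * fact (N-j))"
      by (simp add: binomial_fact)
    then show "fact N * (s^j / fact j * GG t $ (N-j)) = real (N choose j) * bernpoly (N-j) t * s^j"
      by (simp add: bernpoly_GG field_simps)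
  qed simp
  finally show ?thesis .
qed

lemma bern_diff: "N \<ge> 1 \<Longrightarrow> bernpoly N (t+1) - bernpoly N t = real N * t^(N-1)"
proof -
  assume "N \<ge> 1"
  then obtain k where k: "N = Suc k" by (cases N) auto
  have "bernpoly N (t+1) - bernpoly N t = fact N * (GG (t+1) - GG t) $ N"
    by (simp add: bernpoly_GG algebra_simps)
  also have "\<dots> = fact (Suc k) * (t^k / fact k)" by (simp add: GG_diff k)
  also have "\<dots> = real N * t^(N-1)" by (simp add: k)
  finally show ?thesis .
qed

lemma even_sum: "(\<Sum>j=0..2*m. f j) = (\<Sum>i=0..m. f (2*i)) + (\<Sum>i<m. f (2*i+1))"
  for f :: "nat \<Rightarrow> real"
proof (induction m)
  case 0 then show ?case by simp
next
  case (Suc m)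
  have "{0..2 * Suc m} = insert (Suc (Suc (2*m))) (insert (Suc (2*m)) {0..2*m})" by auto
  then have "(\<Sum>j=0..2*Suc m. f j) = f (Suc (Suc (2*m))) + f (Suc (2*m)) + (\<Sum>j=0..2*m. f j)"
    by simp
  then show ?case using Suc by simp
qed

lemma Q_eq: "bernpoly (2*m) (1/2 + s) =
  (\<Sum>i=0..m. real ((2*m) choose (2*i)) * bernpoly (2*m-2*i) (1/2) * s^(2*i))"
proof -
  have "bernpoly (2*m) (1/2 + s) = (\<Sum>j=0..2*m. real ((2*m) choose j) * bernpoly (2*m-j) (1/2) * s^j)"
    by (rule bern_shift)
  also have "\<dots> = (\<Sum>i=0..m. real ((2*m) choose (2*i)) * bernpoly (2*m-2*i) (1/2) * s^(2*i))
      + (\<Sum>i<m. real ((2*m) choose (2*i+1)) * bernpoly (2*m-(2*i+1)) (1/2) * s^(2*i+1))"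
    by (rule even_sum)
  also have "(\<Sum>i<m. real ((2*m) choose (2*i+1)) * bernpoly (2*m-(2*i+1)) (1/2) * s^(2*i+1)) = 0"
  proof (rule sum.neutral, intro ballI)
    fix i assume "i \<in> {..<m}"
    then have "odd (2*m-(2*i+1))" by auto
    then show "real ((2*m) choose (2*i+1)) * bernpoly (2*m-(2*i+1)) (1/2) * s^(2*i+1) = 0"
      by (simp add: bern_half_odd)
  qed
  finally show ?thesis by simp
qed

lemma telescope:
  assumes "m \<ge> 1"
  shows "(\<Sum>i=1..n. (x + real i) ^ (2*m - 1)) =
    (bernpoly (2*m) (x + real n + 1) - bernpoly (2*m) (x + 1)) / (2 * real m)"
proof (induction n)
  case 0 then show ?case by simp
next
  case (Suc n)
  have d: "bernpoly (2*m) ((x + real n + 1) + 1) - bernpoly (2*m) (x + real n + 1)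
      = real (2*m) * (x + real n + 1)^(2*m-1)"
    using assms by (intro bern_diff) auto
  have "(\<Sum>i=1..Suc n. (x + real i) ^ (2*m - 1)) = (\<Sum>i=1..n. (x + real i) ^ (2*m - 1)) + (x + real n + 1)^(2*m-1)"
    by (simp add: add_ac)
  also have "\<dots> = (bernpoly (2*m) (x + real n + 1) - bernpoly (2*m) (x + 1)) / (2 * real m)
      + (bernpoly (2*m) ((x + real n + 1) + 1) - bernpoly (2*m) (x + real n + 1)) / (2 * real m)"
    using Suc d assms by simp
  also have "\<dots> = (bernpoly (2*m) (x + real (Suc n) + 1) - bernpoly (2*m) (x + 1)) / (2 * real m)"
    by (simp add: field_simps add_divide_distrib[symmetric] diff_divide_distrib[symmetric] add.assoc)
  finally show ?case .
qed

lemma binom_part: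
  fixes y L :: real
  assumes "i \<le> m"
  shows "(y^2 + L)^i - y^(2*i) = (\<Sum>k=1..m. real (i choose k) * L^k * y^(2*i-2*k))"
proof -
  have "(y^2 + L)^i = (\<Sum>k=0..i. real (i choose k) * L^k * (y^2)^(i-k))"
    using binomial_ring[of L "y^2" i] by (simp add: add.commute atLeast0AtMost)
  also have "\<dots> = y^(2*i) + (\<Sum>k=1..i. real (i choose k) * L^k * (y^2)^(i-k))"
    by (simp add: sum.atLeast_Suc_atMost power_mult[symmetric])
  finally have "(y^2 + L)^i - y^(2*i) = (\<Sum>k=1..i. real (i choose k) * L^k * y^(2*i-2*k))"
    by (simp add: power_mult[symmetric] diff_mult_distrib2)
  also have "\<dots> = (\<Sum>k=1..m. real (i choose k) * L^k * y^(2*i-2*k))"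
    using assms by (intro sum.mono_neutral_left) auto
  finally show ?thesis .
qed

theorem mainTheorem1:
  fixes m n :: nat and x :: real
  assumes "m \<ge> 1" and "n \<ge> 1"
  shows "(\<Sum>i=1..n. (x + real i) ^ (2*m - 1)) =
         (\<Sum>k=1..m. F_coeff m k x * (real n * (real n + 2*x + 1)) ^ k)"
proof -
  define y where "y = x + 1/2"
  define L where "L = real n * (real n + 2*x + 1)"
  define c where "c i = real ((2*m) choose (2*i)) * bernpoly (2*m-2*i) (1/2)" for i
  have Q: "bernpoly (2*m) (1/2 + s) = (\<Sum>i=0..m. c i * s^(2*i))" for s
    by (simp add: Q_eq c_def)
  have sq: "(y + real n)^(2*i) = (y^2 + L)^i" for i
  proof -
    have "(y + real n)^2 = y^2 + L"
      by (simp add: y_def L_def power2_eq_square algebra_simps)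
    then show ?thesis by (simp add: power_mult)
  qed
  have "(\<Sum>i=1..n. (x + real i) ^ (2*m - 1)) =
    (bernpoly (2*m) (1/2 + (y + real n)) - bernpoly (2*m) (1/2 + y)) / (2 * real m)"
    using telescope[OF assms(1), of x n] by (simp add: y_def add_ac)
  also have "bernpoly (2*m) (1/2 + (y + real n)) - bernpoly (2*m) (1/2 + y)
      = (\<Sum>i=0..m. c i * ((y^2 + L)^i - y^(2*i)))"
    by (simp add: Q sq sum_subtractf[symmetric] right_diff_distrib)
  also have "\<dots> = (\<Sum>i=0..m. \<Sum>k=1..m. c i * (real (i choose k) * L^k * y^(2*i-2*k)))"
    by (intro sum.cong refl) (simp add: binom_part sum_distrib_left)
  also have "\<dots> = (\<Sum>k=1..m. \<Sum>i=0..m. c i * (real (i choose k) * L^k * y^(2*i-2*k)))"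
    by (rule sum.swap)
  also have "\<dots> = (\<Sum>k=1..m. \<Sum>i=k..m. c i * (real (i choose k) * L^k * y^(2*i-2*k)))"
    by (intro sum.cong refl sum.mono_neutral_right) (auto simp: binomial_eq_0)
  finally have "(\<Sum>i=1..n. (x + real i) ^ (2*m - 1)) =
      (\<Sum>k=1..m. \<Sum>i=k..m. c i * (real (i choose k) * L^k * y^(2*i-2*k))) / (2 * real m)" .
  also have "\<dots> = (\<Sum>k=1..m. F_coeff m k x * L ^ k)"
    unfolding F_coeff_def sum_divide_distrib sum_distrib_right
    by (intro sum.cong refl) (simp add: c_def y_def mult_ac sum_distrib_left sum_divide_distrib)
  finally show ?thesis by (simp add: L_def)
qed

end
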